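(* Consider Algorithm SAVIC (described in the context) run with heterogeneous data. Suppose each $f_m$ is $\mu$-strongly convex ($\mu\ge0$) and $L$-smooth, and there are constants $0<\alpha\le\Gamma$ with $\alpha I\preceq D^0\preceq\Gamma I$ and $\alpha I\preceq H^t\preceq\Gamma I$ for all $t$. Then for any $t$ with $t_p\le t<t_{p+1}$, $$-\frac2M\sum_{m=1}^M\langle\hat x_t-x_*,\nabla f_m(x_t^m)\rangle\le-2D_f(\hat x_t,x_* )-\frac{\mu}{\Gamma}\|\hat x_t-x_*\|^2_{\hat D^{t_p}}+\frac{L}{\alpha}V_t.$$
   Context: Problem: minimize $f(x)=\frac1M\sum_mf_m(x)$ over $\mathbb R^d$, $f_m(x)=\mathbb E_{z\sim\mathcal D_m}[f_m(x,z)]$, $x_*$ the solution; $\mu$-strong convexity and $L$-smoothness: $\frac{\mu}{2}\|x-y\|^2\le f_m(x)-f_m(y)-\langle\nabla f_m(y),x-y\rangle\le\frac{L}{2}\|x-y\|^2$. $D_f(x,y)=f(x)-f(y)-\langle\nabla f(y),x-y\rangle$. $\|x\|_A^2=\langle x,Ax\rangle$. Preconditioner: diagonal $D^t$ from diagonal $D^0,H^t$ via $(D^t)^2=\beta_t(D^{t-1})^2+(1-\beta_t)(H^t)^2$ or $D^t=\beta_tD^{t-1}+(1-\beta_t)H^t$, $\beta_t\in[0,1]$; $(\hat D^t)_{ii}=\max\{\alpha,|D^t_{ii}|\}$. Algorithm SAVIC: stepsize $\gamma>0$, $x_0^m=x_0$, synchronization times $t_0=0<t_1<\dots$; at $t=t_p$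 the matrix $\hat D^{t_p}$ is updated and used by all clients for $t_p\le t<t_{p+1}$; client $m$ samples $z_m\sim\mathcal D_m$ i.i.d. and sets $x_{t+1}^m=\frac1M\sum_j(x_t^j-\gamma(\hat D^{t_p})^{-1}\nabla f_j(x_t^j,z_j))$ if $t=t_p$ for some $p$, else $x_{t+1}^m=x_t^m-\gamma(\hat D^{t_p})^{-1}\nabla f_m(x_t^m,z_m)$. Notation: $\hat x_t=\frac1M\sum_mx_t^m$; $V_t=\frac1M\sum_m\|x_t^m-\hat x_t\|^2_{\hat D^{t_p}}$ for $t_p\le t<t_{p+1}$. *)

theory Defs
  imports "HOL-Analysis.Analysis"
begin

text \<open>Diagonal matrices on R^d are represented by their diagonal, a vector of type real^'n.\<close>

definition wnorm2 :: "real^'n \<Rightarrow> real^'n \<Rightarrow> real" where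
  "wnorm2 A v = (\<Sum>i\<in>UNIV. A$i * (v$i)^2)"

text \<open>Preconditioner D^t (sq = True: squared averaging rule; False: linear rule).\<close>
primrec precD :: "bool \<Rightarrow> (nat \<Rightarrow> real) \<Rightarrow> real^'n \<Rightarrow> (nat \<Rightarrow> real^'n) \<Rightarrow> nat \<Rightarrow> real^'n" where
  "precD sq beta D0 H 0 = D0"
| "precD sq beta D0 H (Suc t) =
     (if sq then (\<chi> i. sqrt (beta (Suc t) * (precD sq beta D0 H t $ i)^2
                              + (1 - beta (Suc t)) * (H (Suc t) $ i)^2))
      else beta (Suc t) *\<^sub>R precD sq beta D0 H t + (1 - beta (Suc t)) *\<^sub>R H (Suc t))"

definition precDhat :: "real \<Rightarrow> bool \<Rightarrow> (nat \<Rightarrow> real) \<Rightarrow> real^'n \<Rightarrow> (nat \<Rightarrow> real^'n) \<Rightarrow> nat \<Rightarrow> real^'n" where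
  "precDhat \<alpha> sq beta D0 H t = (\<chi> i. max \<alpha> \<bar>precD sq beta D0 H t $ i\<bar>)"

definition period :: "(nat \<Rightarrow> nat) \<Rightarrow> nat \<Rightarrow> nat" where
  "period tp t = (GREATEST p. tp p \<le> t)"

text \<open>SAVIC iterates x_t^m (clients m < M). G m x z is the stochastic gradient
  \<nabla> f_m(x,z); zs t m is the sample drawn by client m at step t.\<close>
primrec savic_x :: "nat \<Rightarrow> real \<Rightarrow> (nat \<Rightarrow> nat) \<Rightarrow> (nat \<Rightarrow> real^'n)
    \<Rightarrow> (nat \<Rightarrow> real^'n \<Rightarrow> 'z \<Rightarrow> real^'n) \<Rightarrow> (nat \<Rightarrow> nat \<Rightarrow> 'z) \<Rightarrow> real^'n
    \<Rightarrow> nat \<Rightarrow> nat \<Rightarrow> real^'n" where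
  "savic_x M \<gamma> tp Dh G zs x0 0 m = x0"
| "savic_x M \<gamma> tp Dh G zs x0 (Suc t) m =
     (let P = Dh (tp (period tp t));
          step = (\<lambda>j. savic_x M \<gamma> tp Dh G zs x0 t j
                  - (\<chi> i. \<gamma> / (P $ i) * (G j (savic_x M \<gamma> tp Dh G zs x0 t j) (zs t j) $ i)))
      in if t \<in> range tp then (1 / real M) *\<^sub>R (\<Sum>j<M. step j) else step m)"

end

theory Submission
  imports Defs
begin

lemma wnorm2_lower:
  assumes "\<And>i. a \<le> P $ i"
  shows "a * (norm v)^2 \<le> wnorm2 P v"
proof -
  have "(norm v)^2 = (\<Sum>i\<in>UNIV. (v$i)^2)"
    unfolding power2_norm_eq_inner inner_vec_def by (simp add: power2_eq_square)
  hence "a * (norm v)^2 = (\<Sum>i\<in>UNIV. a * (v$i)^2)" by (simp add: sum_distrib_left)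
  also have "\<dots> \<le> wnorm2 P v" unfolding wnorm2_def
    by (intro sum_mono mult_right_mono assms) simp
  finally show ?thesis .
qed

lemma wnorm2_upper:
  assumes "\<And>i. P $ i \<le> a"
  shows "wnorm2 P v \<le> a * (norm v)^2"
proof -
  have "(norm v)^2 = (\<Sum>i\<in>UNIV. (v$i)^2)"
    unfolding power2_norm_eq_inner inner_vec_def by (simp add: power2_eq_square)
  hence "a * (norm v)^2 = (\<Sum>i\<in>UNIV. a * (v$i)^2)" by (simp add: sum_distrib_left)
  moreover have "wnorm2 P v \<le> (\<Sum>i\<in>UNIV. a * (v$i)^2)" unfolding wnorm2_def
    by (intro sum_mono mult_right_mono assms) simp
  ultimately show ?thesis by simp
qed

lemma precD_bd:
  assumes "\<And>i. a \<le> D0 $ i \<and> D0 $ i \<le> b" "\<And>s i. a \<le> H s $ i \<and> H s $ i \<le> b"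
    "\<And>s. 0 \<le> beta s \<and> beta s \<le> 1" "0 < a"
  shows "a \<le> precD sq beta D0 H t $ i \<and> precD sq beta D0 H t $ i \<le> b"
proof (induction t arbitrary: i)
  case 0 then show ?case using assms(1) by simp
next
  case (Suc t)
  define u where "u = precD sq beta D0 H t $ i"
  define h where "h = H (Suc t) $ i"
  define c where "c = beta (Suc t)"
  have u: "a \<le> u" "u \<le> b" using Suc u_def by auto
  have h: "a \<le> h" "h \<le> b" using assms(2) h_def by auto
  have c: "0 \<le> c" "c \<le> 1" using assms(3) c_def by auto
  show ?case
  proof (cases sq)
    case True
    have e: "precD sq beta D0 H (Suc t) $ i = sqrt (c * u^2 + (1-c) * h^2)"
      using True by (simp add: u_def h_def c_def)
    have a2: "a^2 \<le> u^2" "a^2 \<le> h^2" "u^2 \<le> b^2" "h^2 \<le> b^2"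
      using u h assms(4) by (auto intro: power_mono)
    have lo: "a^2 \<le> c * u^2 + (1-c) * h^2"
    proof -
      have "c * a^2 \<le> c * u^2" "(1-c)*a^2 \<le> (1-c)*h^2"
        using a2 c by (auto intro: mult_left_mono)
      thus ?thesis by (simp add: algebra_simps)
    qed
    have hi: "c * u^2 + (1-c) * h^2 \<le> b^2"
    proof -
      have "c * u^2 \<le> c * b^2" "(1-c)*h^2 \<le> (1-c)*b^2"
        using a2 c by (auto intro: mult_left_mono)
      thus ?thesis by (simp add: algebra_simps)
    qed
    have "a \<le> sqrt (c * u^2 + (1-c) * h^2)"
      using real_sqrt_le_mono[OF lo] assms(4) by simp
    moreover have "sqrt (c * u^2 + (1-c) * h^2) \<le> b"
      using real_sqrt_le_mono[OF hi] u assms(4) by simp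
    ultimately show ?thesis using e by simp
  next
    case False
    have e: "precD sq beta D0 H (Suc t) $ i = c * u + (1-c) * h"
      using False by (simp add: u_def h_def c_def)
    have "c * a \<le> c * u" "(1-c)*a \<le> (1-c)*h" "c * u \<le> c * b" "(1-c)*h \<le> (1-c)*b"
      using u h c by (auto intro: mult_left_mono)
    then show ?thesis using e by (simp add: algebra_simps)
  qed
qed


theorem lemma6:
  fixes M :: nat and f :: "nat \<Rightarrow> real^'n \<Rightarrow> real" and gf :: "nat \<Rightarrow> real^'n \<Rightarrow> real^'n"
    and \<mu> L \<alpha> \<Gamma> \<gamma> :: real and xs x0 D0 :: "real^'n" and H :: "nat \<Rightarrow> real^'n"
    and beta :: "nat \<Rightarrow> real" and sq :: bool and tp :: "nat \<Rightarrow> nat"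
    and G :: "nat \<Rightarrow> real^'n \<Rightarrow> 'z \<Rightarrow> real^'n" and zs :: "nat \<Rightarrow> nat \<Rightarrow> 'z"
    and t p :: nat
  defines "F \<equiv> (\<lambda>x. (1 / real M) * (\<Sum>m<M. f m x))"
    and "gF \<equiv> (\<lambda>x. (1 / real M) *\<^sub>R (\<Sum>m<M. gf m x))"
    and "Dh \<equiv> precDhat \<alpha> sq beta D0 H"
    and "x \<equiv> savic_x M \<gamma> tp (precDhat \<alpha> sq beta D0 H) G zs x0"
  assumes M_pos: "M > 0"
    and grad: "\<And>m x. m < M \<Longrightarrow> (f m has_derivative (\<lambda>h. gf m x \<bullet> h)) (at x)"
    and sconv: "\<And>m x y. m < M \<Longrightarrow>
        \<mu> / 2 * (norm (x - y))^2 \<le> f m x - f m y - gf m y \<bullet> (x - y)"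
    and smooth: "\<And>m x y. m < M \<Longrightarrow>
        f m x - f m y - gf m y \<bullet> (x - y) \<le> L / 2 * (norm (x - y))^2"
    and mu: "0 \<le> \<mu>"
    and alpha: "0 < \<alpha>" and alpha_Gamma: "\<alpha> \<le> \<Gamma>"
    and D0_bd: "\<And>i. \<alpha> \<le> D0 $ i \<and> D0 $ i \<le> \<Gamma>"
    and H_bd: "\<And>s i. \<alpha> \<le> H s $ i \<and> H s $ i \<le> \<Gamma>"
    and beta_bd: "\<And>s. 0 \<le> beta s \<and> beta s \<le> 1"
    and gamma: "\<gamma> > 0"
    and xs_min: "\<And>y. F xs \<le> F y"
    and tp0: "tp 0 = 0" and tp_mono: "strict_mono tp"
    and tp_t: "tp p \<le> t" "t < tp (Suc p)"
  shows "let xh = (1 / real M) *\<^sub>R (\<Sum>m<M. x t m);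
             P = Dh (tp p);
             V = (1 / real M) * (\<Sum>m<M. wnorm2 P (x t m - xh));
             DF = F xh - F xs - gF xs \<bullet> (xh - xs)
         in - (2 / real M) * (\<Sum>m<M. (xh - xs) \<bullet> gf m (x t m))
            \<le> - 2 * DF - \<mu> / \<Gamma> * wnorm2 P (xh - xs) + L / \<alpha> * V"
proof -
  define y where "y = (\<lambda>m. x t m)"
  define xh where "xh = (1 / real M) *\<^sub>R (\<Sum>m<M. y m)"
  define P where "P = Dh (tp p)"
  have Pb: "\<alpha> \<le> P $ i \<and> P $ i \<le> \<Gamma>" for i
  proof -
    have b: "\<alpha> \<le> precD sq beta D0 H (tp p) $ i \<and> precD sq beta D0 H (tp p) $ i \<le> \<Gamma>"
      by (rule precD_bd[OF D0_bd H_bd beta_bd alpha])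
    show ?thesis unfolding P_def Dh_def precDhat_def using b alpha by auto
  qed
  have L0: "0 \<le> L"
  proof -
    have "(1::real^'n) \<noteq> 0" by (simp add: vec_eq_iff)
    hence np: "(norm (1::real^'n))^2 > 0" by simp
    have "\<mu> / 2 * (norm ((1::real^'n) - 0))^2 \<le> L / 2 * (norm ((1::real^'n) - 0))^2"
      using sconv[OF M_pos, of 1 0] smooth[OF M_pos, of 1 0] by linarith
    hence "\<mu> * (norm (1::real^'n))^2 \<le> L * (norm (1::real^'n))^2" by simp
    hence "\<mu> / 2 \<le> L / 2" using np mult_right_le_imp_le by fastforce
    thus ?thesis using mu by simp
  qed
  have gF0: "gF xs = 0"
  proof -
    have d: "(F has_derivative (\<lambda>h. gF xs \<bullet> h)) (at xs)"
    proof -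
      have "((\<lambda>z. \<Sum>m<M. f m z) has_derivative (\<lambda>h. \<Sum>m<M. gf m xs \<bullet> h)) (at xs)"
        by (intro has_derivative_sum grad) simp
      hence "((\<lambda>z. (1 / real M) * (\<Sum>m<M. f m z)) has_derivative (\<lambda>h. (1 / real M) * (\<Sum>m<M. gf m xs \<bullet> h))) (at xs)"
        by (intro has_derivative_mult_right)
      moreover have "(\<lambda>h. (1 / real M) * (\<Sum>m<M. gf m xs \<bullet> h)) = (\<lambda>h. gF xs \<bullet> h)"
        unfolding gF_def by (simp add: inner_sum_left)
      ultimately show ?thesis unfolding F_def by simp
    qed
    have "(\<lambda>h. gF xs \<bullet> h) = (\<lambda>h. 0)"
      by (rule has_derivative_local_min[OF d]) (simp add: xs_min)
    hence "gF xs \<bullet> gF xs = 0" by metis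
    thus ?thesis by simp
  qed
  have S1: "- ((xh - xs) \<bullet> gf m (y m)) \<le> f m xs - f m xh + L/2 * (norm (xh - y m))^2 - \<mu>/2 * (norm (y m - xs))^2"
    if "m < M" for m
  proof -
    have a: "\<mu> / 2 * (norm (xs - y m))^2 \<le> f m xs - f m (y m) - gf m (y m) \<bullet> (xs - y m)"
      using sconv[OF that] .
    have b: "f m xh - f m (y m) - gf m (y m) \<bullet> (xh - y m) \<le> L / 2 * (norm (xh - y m))^2"
      using smooth[OF that] .
    have c: "(xh - xs) \<bullet> gf m (y m) = gf m (y m) \<bullet> (xh - y m) - gf m (y m) \<bullet> (xs - y m)"
      by (simp add: inner_diff_left inner_diff_right inner_commute[of "gf m (y m)"])
    show ?thesis using a b c by (simp add: norm_minus_commute)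
  qed
  define A where "A = (\<Sum>m<M. f m xs)"
  define B where "B = (\<Sum>m<M. f m xh)"
  define C where "C = (\<Sum>m<M. (norm (xh - y m))^2)"
  define E where "E = (\<Sum>m<M. (norm (y m - xs))^2)"
  define S where "S = (\<Sum>m<M. (xh - xs) \<bullet> gf m (y m))"
  define W where "W = (\<Sum>m<M. wnorm2 P (y m - xh))"
  define w where "w = wnorm2 P (xh - xs)"
  define N where "N = (norm (xh - xs))^2"
  have S2: "- S \<le> A - B + L/2 * C - \<mu>/2 * E"
  proof -
    have "(\<Sum>m<M. - ((xh - xs) \<bullet> gf m (y m))) \<le> (\<Sum>m<M. f m xs - f m xh + L/2 * (norm (xh - y m))^2 - \<mu>/2 * (norm (y m - xs))^2)"
      by (intro sum_mono S1) simp
    thus ?thesis unfolding A_def B_def C_def E_def S_def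
      by (simp add: sum_subtractf sum.distrib sum_distrib_left sum_negf)
  qed
  have S3: "\<alpha> * C \<le> W"
  proof -
    have "\<alpha> * C = (\<Sum>m<M. \<alpha> * (norm (y m - xh))^2)"
      unfolding C_def by (simp add: sum_distrib_left norm_minus_commute)
    also have "\<dots> \<le> W" unfolding W_def
      by (intro sum_mono wnorm2_lower) (use Pb in auto)
    finally show ?thesis .
  qed
  have S4: "real M * N \<le> E"
  proof -
    have e: "xh - xs = (1 / real M) *\<^sub>R (\<Sum>m<M. y m - xs)"
    proof -
      have "(\<Sum>m<M. y m - xs) = (\<Sum>m<M. y m) - real M *\<^sub>R xs"
        by (simp add: sum_subtractf sum_constant_scaleR del: sum_constant)
      thus ?thesis unfolding xh_def using M_pos by (simp add: scaleR_diff_right)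
    qed
    have "norm (xh - xs) \<le> (1 / real M) * (\<Sum>m<M. norm (y m - xs))"
      unfolding e using norm_sum[of "\<lambda>m. y m - xs" "{..<M}"] by (simp add: divide_right_mono)
    hence "(norm (xh - xs))^2 \<le> ((1 / real M) * (\<Sum>m<M. norm (y m - xs)))^2"
      by (intro power_mono) auto
    also have "\<dots> = (1 / real M)^2 * (\<Sum>m<M. norm (y m - xs))^2"
      by (simp add: power_mult_distrib power_divide)
    also have "\<dots> \<le> (1 / real M)^2 * (E * real M)"
      unfolding E_def using sum_squared_le_sum_of_squares[of "\<lambda>m. norm (y m - xs)" "{..<M}"]
      by (intro mult_left_mono) auto
    also have "\<dots> = E / real M" using M_pos by (simp add: power2_eq_square)
    finally have "N \<le> E / real M" unfolding N_def .
    thus ?thesis using M_pos by (simp add: field_simps)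
  qed
  have S5: "w \<le> \<Gamma> * N"
    unfolding w_def N_def by (rule wnorm2_upper) (use Pb in auto)
  have DF: "F xh - F xs - gF xs \<bullet> (xh - xs) = B / real M - A / real M"
    unfolding F_def A_def B_def gF0 by simp
  have Gpos: "\<Gamma> > 0" using alpha alpha_Gamma by simp
  have Mpos: "real M > 0" using M_pos by simp
  have T1: "L * C \<le> L / \<alpha> * W"
  proof -
    have "L * (\<alpha> * C) \<le> L * W" using S3 L0 by (rule mult_left_mono)
    thus ?thesis using alpha by (simp add: field_simps)
  qed
  have T2: "\<mu> / \<Gamma> * w \<le> \<mu> * N"
  proof -
    have "\<mu> * w \<le> \<mu> * (\<Gamma> * N)" using S5 mu by (rule mult_left_mono)
    thus ?thesis using Gpos by (simp add: field_simps)
  qed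
  have T3: "\<mu> * N \<le> \<mu> * E / real M"
  proof -
    have "\<mu> * (real M * N) \<le> \<mu> * E" using S4 mu by (rule mult_left_mono)
    thus ?thesis using Mpos by (simp add: field_simps)
  qed
  have main: "- (2 / real M) * S \<le> - 2 * (B / real M - A / real M) - \<mu> / \<Gamma> * w + L / \<alpha> * (W / real M)"
  proof -
    have "- (2 / real M) * S = (2 / real M) * (- S)" by simp
    also have "\<dots> \<le> (2 / real M) * (A - B + L/2 * C - \<mu>/2 * E)"
      using S2 Mpos by (intro mult_left_mono) auto
    also have "\<dots> = 2 * A / real M - 2 * B / real M + (L * C) / real M - \<mu> * E / real M"
      using Mpos by (simp add: field_simps)
    also have "\<dots> \<le> 2 * A / real M - 2 * B / real M + (L / \<alpha> * W) / real M - \<mu> / \<Gamma> * w"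
    proof -
      have "(L * C) / real M \<le> (L / \<alpha> * W) / real M"
        using T1 Mpos by (rule divide_right_mono[OF _ less_imp_le])
      thus ?thesis using T2 T3 by linarith
    qed
    also have "\<dots> = - 2 * (B / real M - A / real M) - \<mu> / \<Gamma> * w + L / \<alpha> * (W / real M)"
      by (simp add: field_simps)
    finally show ?thesis .
  qed
  show ?thesis
    unfolding Let_def
    using main DF
    unfolding S_def W_def w_def y_def[symmetric] xh_def[symmetric] P_def[symmetric]
    by (simp add: Dh_def x_def)
qed

end
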